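(* Let $m\ge3$ and let $\mathscr{P}$ be a symmetric irreducible transition probability tensor of order $m$ and dimension $2$. Then $\mathscr{P}$ has a unique stationary probability vector, namely $(\tfrac12,\tfrac12)^\top$.
   Context: $\mathscr{P}=(p_{i_1\cdots i_m})$ is a tensor of order $m$ and dimension $n$ with real entries indexed by $i_1,\dots,i_m\in\{1,\dots,n\}$; here $n=2$. It is symmetric if its entries are invariant under every permutation of indices. It is a transition probability tensor if $0\le p_{i_1\cdots i_m}\le1$ and $\sum_{i_1=1}^np_{i_1i_2\cdots i_m}=1$ for all $i_2,\dots,i_m$. The tensor is reducible if there is a nonempty proper subset $I\subset\{1,\dots,n\}$ such that $p_{i_1i_2\cdots i_m}=0$ for all $i_1\in I$ and all $i_2,\dots,i_m\notin I$. It is irreducible if it is not reducible. A stationary probability vector of $\mathscr{P}$ is a vector $z=(z_1,z_2)^\top$ with $z_1,z_2\ge0$ and $z_1+z_2=1$ such that $$\sum_{i_2,\dots,i_m=1}^2p_{ii_2\cdots i_m}z_{i_2}\cdots z_{i_m}=z_i\quad\text{for } i=1,2.$$ *)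

theory Defs
  imports Complex_Main "HOL-Library.Multiset"
begin

text \<open>A tensor of order m and dimension n is a function on index lists
  (i_1,...,i_m) with entries in {1..n}; values outside are irrelevant.\<close>

definition idx :: "nat \<Rightarrow> nat \<Rightarrow> nat list set" where
  "idx m n = {xs. length xs = m \<and> set xs \<subseteq> {1..n}}"

definition sym_tensor :: "(nat list \<Rightarrow> real) \<Rightarrow> nat \<Rightarrow> nat \<Rightarrow> bool" where
  "sym_tensor P m n \<longleftrightarrow>
     (\<forall>xs\<in>idx m n. \<forall>ys. mset ys = mset xs \<longrightarrow> P ys = P xs)"

definition transition_prob_tensor :: "(nat list \<Rightarrow> real) \<Rightarrow> nat \<Rightarrow> nat \<Rightarrow> bool" where
  "transition_prob_tensor P m n \<longleftrightarrow>
     (\<forall>xs\<in>idx m n. 0 \<le> P xs \<and> P xs \<le> 1) \<and>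
     (\<forall>rest\<in>idx (m - 1) n. (\<Sum>i\<in>{1..n}. P (i # rest)) = 1)"

definition reducible_tensor :: "(nat list \<Rightarrow> real) \<Rightarrow> nat \<Rightarrow> nat \<Rightarrow> bool" where
  "reducible_tensor P m n \<longleftrightarrow>
     (\<exists>I. I \<noteq> {} \<and> I \<subset> {1..n} \<and>
        (\<forall>i\<in>I. \<forall>rest. length rest = m - 1 \<and> set rest \<subseteq> {1..n} - I \<longrightarrow> P (i # rest) = 0))"

definition irreducible_tensor :: "(nat list \<Rightarrow> real) \<Rightarrow> nat \<Rightarrow> nat \<Rightarrow> bool" where
  "irreducible_tensor P m n \<longleftrightarrow> \<not> reducible_tensor P m n"

definition stationary_prob_vector ::
    "(nat list \<Rightarrow> real) \<Rightarrow> nat \<Rightarrow> nat \<Rightarrow> (nat \<Rightarrow> real) \<Rightarrow> bool" where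
  "stationary_prob_vector P m n z \<longleftrightarrow>
     (\<forall>i\<in>{1..n}. 0 \<le> z i) \<and> (\<Sum>i\<in>{1..n}. z i) = 1 \<and>
     (\<forall>i\<in>{1..n}. (\<Sum>rest\<in>idx (m - 1) n. P (i # rest) * prod_list (map z rest)) = z i)"

end

theory Submission
  imports Defs
begin

lemma idx_finite: "finite (idx n k)"
proof -
  have "idx n k = {xs. set xs \<subseteq> {1..k} \<and> length xs = n}" by (auto simp: idx_def)
  thus ?thesis using finite_lists_length_eq[of "{1..k}" n] by simp
qed

lemma idx_0: "idx 0 k = {[]}" by (auto simp: idx_def)

lemma idx_Suc2: "idx (Suc n) 2 = Cons 1 ` idx n 2 \<union> Cons 2 ` idx n 2"
proof
  show "idx (Suc n) 2 \<subseteq> Cons 1 ` idx n 2 \<union> Cons 2 ` idx n 2"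
  proof
    fix xs assume "xs \<in> idx (Suc n) 2"
    then obtain y ys where xs: "xs = y # ys" and "length ys = n" "y \<in> {1..2}" "set ys \<subseteq> {1..2}"
      by (cases xs) (auto simp: idx_def)
    moreover have "y = 1 \<or> y = 2" using \<open>y \<in> {1..2}\<close> by auto
    ultimately show "xs \<in> Cons 1 ` idx n 2 \<union> Cons 2 ` idx n 2" by (auto simp: idx_def)
  qed
qed (auto simp: idx_def subset_iff)

lemma sum_idx: "(\<Sum>r\<in>idx n 2. prod_list (map w r)) = (w 1 + w 2 :: real) ^ n"
proof (induction n)
  case 0 thus ?case by (simp add: idx_0)
next
  case (Suc n)
  have d: "Cons 1 ` idx n 2 \<inter> Cons 2 ` idx n 2 = {}" by auto
  have "(\<Sum>r\<in>idx (Suc n) 2. prod_list (map w r)) =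
        (\<Sum>r\<in>Cons 1 ` idx n 2. prod_list (map w r)) + (\<Sum>r\<in>Cons 2 ` idx n 2. prod_list (map w r))"
    unfolding idx_Suc2 by (rule sum.union_disjoint) (auto simp: idx_finite)
  also have "\<dots> = w 1 * (\<Sum>r\<in>idx n 2. prod_list (map w r)) + w 2 * (\<Sum>r\<in>idx n 2. prod_list (map w r))"
    by (simp add: sum.reindex sum_distrib_left)
  finally show ?case using Suc by (simp add: algebra_simps)
qed

lemma prod_sign: "prod_list (map (z(1 := - z 1)) r) = (-1) ^ count (mset r) (1::nat) * prod_list (map z r :: real list)"
  by (induction r) auto

lemma count12: "set xs \<subseteq> {1..2} \<Longrightarrow> count (mset xs) (1::nat) + count (mset xs) 2 = length xs"
  by (induction xs) auto

lemma mset_norm: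
  assumes "xs \<in> idx m 2"
  shows "mset xs = mset (replicate (count (mset xs) 1) 1 @ replicate (m - count (mset xs) 1) (2::nat))"
proof -
  have s: "set xs \<subseteq> {1..2}" and l: "length xs = m" using assms by (auto simp: idx_def)
  have c: "count (mset xs) 2 = m - count (mset xs) 1" using count12[OF s] l by simp
  show ?thesis
  proof (rule multiset_eqI)
    fix x :: nat
    show "count (mset xs) x = count (mset (replicate (count (mset xs) 1) 1 @ replicate (m - count (mset xs) 1) 2)) x"
    proof (cases "x = 1 \<or> x = 2")
      case True thus ?thesis using c by (auto simp: count_replicate_mset)
    next
      case False
      hence "x \<notin> set xs" using s by auto
      hence "count (mset xs) x = 0" by (simp add: count_mset_0_iff)
      thus ?thesis using False by (auto simp: count_replicate_mset)
    qed
  qed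
qed


lemma i12set: "{1..2::nat} = {1,2}" by auto

lemma set_sub_rep: "set r \<subseteq> {x} \<Longrightarrow> r = replicate (length r) x"
  by (metis replicate_length_same singletonD subset_iff)

theorem corollary2p2:
  fixes P :: "nat list \<Rightarrow> real" and m :: nat
  assumes "m \<ge> 3"
    and "sym_tensor P m 2"
    and "irreducible_tensor P m 2"
    and "transition_prob_tensor P m 2"
  shows "stationary_prob_vector P m 2 (\<lambda>i. 1/2) \<and>
         (\<forall>z. stationary_prob_vector P m 2 z \<longrightarrow> z 1 = 1/2 \<and> z 2 = 1/2)"
proof -
  define n where "n = m - 1"
  define g where "g k = P (replicate k 1 @ replicate (m - k) 2)" for k
  define c where "c = g 0"
  define e where "e = c - 1/2"
  have mn: "m = Suc n" "n \<ge> 2" using assms(1) by (auto simp: n_def)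
  have A: "P xs = g (count (mset xs) 1)" if "xs \<in> idx m 2" for xs
  proof -
    have "P (replicate (count (mset xs) 1) 1 @ replicate (m - count (mset xs) 1) 2) = P xs"
      using assms(2) that mset_norm[OF that] unfolding sym_tensor_def by metis
    thus ?thesis by (simp add: g_def)
  qed
  have B: "g (Suc k) + g k = 1" if "k < m" for k
  proof -
    define r where "r = replicate k (1::nat) @ replicate (m - 1 - k) 2"
    have r: "r \<in> idx (m - 1) 2" using that by (auto simp: r_def idx_def)
    have "(\<Sum>i\<in>{1..2}. P (i # r)) = 1" using assms(4) r unfolding transition_prob_tensor_def by blast
    hence "P (1 # r) + P (2 # r) = 1" by (simp add: numeral_2_eq_2)
    moreover have "1 # r \<in> idx m 2" "2 # r \<in> idx m 2" using r mn by (auto simp: idx_def)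
    ultimately show ?thesis using A by (simp add: r_def)
  qed
  have C: "g k = 1/2 + e * (-1)^k" if "k \<le> m" for k
    using that
  proof (induction k)
    case 0 thus ?case by (simp add: e_def c_def)
  next
    case (Suc k)
    thus ?case using B[of k] by simp
  qed
  have D1: "P (1 # r) = 1/2 - e * (-1) ^ count (mset r) 1" if "r \<in> idx n 2" for r
  proof -
    have "1 # r \<in> idx m 2" using that mn by (auto simp: idx_def)
    moreover have "count (mset r) 1 \<le> n" using that by (auto simp: idx_def intro: order.trans[OF count_le_size])
    ultimately show ?thesis using A C[of "Suc (count (mset r) 1)"] mn by simp
  qed
  have D2: "P (2 # r) = 1/2 + e * (-1) ^ count (mset r) 1" if "r \<in> idx n 2" for r
  proof -
    have "2 # r \<in> idx m 2" using that mn by (auto simp: idx_def)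
    moreover have "count (mset r) 1 \<le> n" using that by (auto simp: idx_def intro: order.trans[OF count_le_size])
    ultimately show ?thesis using A C[of "count (mset r) 1"] mn by simp
  qed
  have S0: "(\<Sum>r\<in>idx n 2. (-1) ^ count (mset r) 1 * prod_list (map z r)) = (z 2 - z 1 :: real) ^ n" for z
    using sum_idx[of "z(1 := - z 1)" n] unfolding prod_sign by simp
  have S1: "(\<Sum>r\<in>idx n 2. P (1 # r) * prod_list (map z r)) = 1/2 * (z 1 + z 2)^n - e * (z 2 - z 1)^n" for z
  proof -
    have "(\<Sum>r\<in>idx n 2. P (1 # r) * prod_list (map z r)) =
      (\<Sum>r\<in>idx n 2. 1/2 * prod_list (map z r) - e * ((-1) ^ count (mset r) 1 * prod_list (map z r)))"
      by (rule sum.cong) (simp_all only: D1 algebra_simps)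
    also have "\<dots> = 1/2 * (z 1 + z 2)^n - e * (z 2 - z 1)^n"
      by (simp only: sum_subtractf sum_distrib_left[symmetric] sum_idx S0)
    finally show ?thesis .
  qed
  have S2: "(\<Sum>r\<in>idx n 2. P (2 # r) * prod_list (map z r)) = 1/2 * (z 1 + z 2)^n + e * (z 2 - z 1)^n" for z
  proof -
    have "(\<Sum>r\<in>idx n 2. P (2 # r) * prod_list (map z r)) =
      (\<Sum>r\<in>idx n 2. 1/2 * prod_list (map z r) + e * ((-1) ^ count (mset r) 1 * prod_list (map z r)))"
      by (rule sum.cong) (simp_all only: D2 algebra_simps)
    also have "\<dots> = 1/2 * (z 1 + z 2)^n + e * (z 2 - z 1)^n"
      by (simp only: sum.distrib sum_distrib_left[symmetric] sum_idx S0)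
    finally show ?thesis .
  qed
  have i12: "i \<in> {1..2} \<longleftrightarrow> i = 1 \<or> i = (2::nat)" for i by auto
  have m1: "m - 1 = n" by (simp add: n_def)
  have part1: "stationary_prob_vector P m 2 (\<lambda>i. 1/2)"
    unfolding stationary_prob_vector_def m1
  proof (intro conjI ballI)
    fix i :: nat assume "i \<in> {1..2}"
    hence "i = 1 \<or> i = 2" by auto
    moreover have "(0::real) ^ n = 0" using mn by simp
    ultimately show "(\<Sum>rest\<in>idx n 2. P (i # rest) * prod_list (map (\<lambda>i. 1/2) rest)) = 1/2"
      using S1[of "\<lambda>i. 1/2"] S2[of "\<lambda>i. 1/2"] by auto
  qed (auto simp: numeral_2_eq_2)
  have part2: "z 1 = 1/2 \<and> z 2 = 1/2" if st: "stationary_prob_vector P m 2 z" for z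
  proof -
    have z: "z 1 \<ge> 0" "z 2 \<ge> 0" "z 1 + z 2 = 1"
      and eq: "1/2 * (z 1 + z 2)^n - e * (z 2 - z 1)^n = z 1"
      using st S1[of z] unfolding stationary_prob_vector_def m1 i12
      by (auto simp: numeral_2_eq_2)
    define d where "d = z 2 - z 1"
    have deq: "d = 2 * e * d ^ n" using eq z by (simp add: d_def algebra_simps)
    have dabs: "\<bar>d\<bar> \<le> 1" using z by (simp add: d_def)
    have c01: "0 \<le> c" "c \<le> 1"
    proof -
      have "replicate m 2 \<in> idx m 2" by (auto simp: idx_def)
      thus "0 \<le> c" "c \<le> 1" using assms(4) unfolding transition_prob_tensor_def c_def g_def by auto
    qed
    have eabs: "\<bar>2 * e\<bar> \<le> 1" using c01 by (simp add: e_def)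
    have g1: "g 1 \<noteq> 0"
    proof
      assume h: "g 1 = 0"
      have H: "\<forall>i\<in>{1::nat}. \<forall>rest. length rest = m - 1 \<and> set rest \<subseteq> {1..2} - {1} \<longrightarrow> P (i # rest) = 0"
      proof (intro ballI allI impI)
        fix i rest assume "i \<in> {1::nat}" and hr: "length rest = m - 1 \<and> set rest \<subseteq> {1..2::nat} - {1}"
        hence "set rest \<subseteq> {2}" by auto
        hence "rest = replicate n 2" using hr set_sub_rep[of rest 2] m1 by simp
        have "1 # replicate n 2 \<in> idx m 2" using mn by (auto simp: idx_def)
        hence "P (1 # replicate n 2) = g (count (mset (1 # replicate n (2::nat))) 1)" by (rule A)
        also have "count (mset (1 # replicate n (2::nat))) 1 = 1" by simp
        finally have "P (1 # replicate n 2) = 0" using h by simp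
        moreover have "i = 1" using \<open>i \<in> {1}\<close> by simp
        ultimately show "P (i # rest) = 0" using \<open>rest = replicate n 2\<close> by simp
      qed
      have "{1::nat} \<noteq> {} \<and> {1::nat} \<subset> {1..2}" unfolding i12set psubset_eq by auto
      hence "reducible_tensor P m 2" unfolding reducible_tensor_def using H by blast
      thus False using assms(3) by (simp add: irreducible_tensor_def)
    qed
    have gn: "g n \<noteq> 0"
    proof
      assume h: "g n = 0"
      have H: "\<forall>i\<in>{2::nat}. \<forall>rest. length rest = m - 1 \<and> set rest \<subseteq> {1..2} - {2} \<longrightarrow> P (i # rest) = 0"
      proof (intro ballI allI impI)
        fix i rest assume "i \<in> {2::nat}" and hr: "length rest = m - 1 \<and> set rest \<subseteq> {1..2::nat} - {2}"
        hence "set rest \<subseteq> {1}" by auto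
        hence "rest = replicate n 1" using hr set_sub_rep[of rest 1] m1 by simp
        have "2 # replicate n 1 \<in> idx m 2" using mn by (auto simp: idx_def)
        hence "P (2 # replicate n 1) = g (count (mset (2 # replicate n (1::nat))) 1)" by (rule A)
        also have "count (mset (2 # replicate n (1::nat))) 1 = n" by simp
        finally have "P (2 # replicate n 1) = 0" using h by simp
        moreover have "i = 2" using \<open>i \<in> {2}\<close> by simp
        ultimately show "P (i # rest) = 0" using \<open>rest = replicate n 1\<close> by simp
      qed
      have "{2::nat} \<noteq> {} \<and> {2::nat} \<subset> {1..2}" unfolding i12set psubset_eq by auto
      hence "reducible_tensor P m 2" unfolding reducible_tensor_def using H by blast
      thus False using assms(3) by (simp add: irreducible_tensor_def)
    qed
    have "d = 0"
    proof (rule ccontr)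
      assume dn: "d \<noteq> 0"
      obtain k where k: "n = Suc k" using mn by (cases n) auto
      have one: "1 = 2 * e * d ^ k" using deq dn k by (simp add: algebra_simps)
      have "\<bar>d\<bar> ^ k \<le> 1" using dabs by (simp add: power_le_one)
      hence "1 \<le> \<bar>2 * e\<bar>" using one
        by (metis abs_1 abs_ge_zero abs_mult mult_left_le power_abs)
      hence "\<bar>2 * e\<bar> = 1" using eabs by simp
      moreover have "e \<noteq> 1/2" using g1 C[of 1] mn by auto
      ultimately have em: "e = - 1/2" by (auto simp: abs_if split: if_splits)
      have "odd n"
      proof (rule ccontr)
        assume "\<not> odd n"
        thus False using gn C[of n] mn em by simp
      qed
      hence "even k" using k by simp
      hence "d ^ k \<ge> 0" by (simp add: zero_le_even_power)
      thus False using one em by simp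
    qed
    thus ?thesis using z by (simp add: d_def)
  qed
  show ?thesis using part1 part2 by blast
qed

end
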